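(* For every $\delta>0$ and $n\in\mathbb{N}$ there exists $N\in\mathbb{N}$ such that the following holds for every $N$-partitioned hypergraph $H$ and every choice of subsets $A_{ijk}\subseteq V_{ij}$, for $i<j<k$, $i,j,k\in[N]$, with $|A_{ijk}|\ge\delta|V_{ij}|$: there exist an induced $n$-partitioned subhypergraph $H'$ of $H$ with index set $I\subseteq[N]$ and vertices $\alpha_{ij}\in V_{ij}$, $i<j$, $i,j\in I$, such that $\alpha_{ij}\in A_{ijk}$ for all $k\in I$ with $k>j$.
   Context: An $n$-partitioned hypergraph $H$ is a finite $3$-uniform hypergraph whose vertex set is partitioned into nonempty sets $V_{ij}$, $1\le i<j\le n$, such that every edge has, for some $1\le i<j<k\le n$, exactly one vertex in each of $V_{ij}$, $V_{ik}$, $V_{jk}$. For $I\subseteq[n]$, the induced subhypergraph with index set $I$ is the $|I|$-partitioned hypergraph with parts $V_{ij}$, $i<j$, $i,j\in I$ (indexed by elements of $I$) and all edges of $H$ contained in the union of these parts. *)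

theory Defs
  imports Complex_Main
begin

text \<open>An N-partitioned 3-uniform hypergraph on vertices of type nat.
  V i j is the part V_ij (only meaningful for 1 <= i < j <= N), E is the set of
  edges (each edge a 3-element vertex set).\<close>

definition partitioned_hypergraph ::
  "nat \<Rightarrow> (nat \<Rightarrow> nat \<Rightarrow> nat set) \<Rightarrow> nat set set \<Rightarrow> bool" where
  "partitioned_hypergraph N V E \<longleftrightarrow>
     (\<forall>i j. 1 \<le> i \<and> i < j \<and> j \<le> N \<longrightarrow> finite (V i j) \<and> V i j \<noteq> {}) \<and>
     (\<forall>i j i' j'. 1 \<le> i \<and> i < j \<and> j \<le> N \<and> 1 \<le> i' \<and> i' < j' \<and> j' \<le> N
        \<and> (i, j) \<noteq> (i', j') \<longrightarrow> V i j \<inter> V i' j' = {}) \<and>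
     finite E \<and>
     (\<forall>e\<in>E. \<exists>i j k x y z. 1 \<le> i \<and> i < j \<and> j < k \<and> k \<le> N \<and>
        x \<in> V i j \<and> y \<in> V i k \<and> z \<in> V j k \<and> e = {x, y, z})"

definition induced_edges ::
  "nat set \<Rightarrow> (nat \<Rightarrow> nat \<Rightarrow> nat set) \<Rightarrow> nat set set \<Rightarrow> nat set set" where
  "induced_edges I V E = {e \<in> E. e \<subseteq> (\<Union>i\<in>I. \<Union>j\<in>I. if i < j then V i j else {})}"

end

theory Submission
  imports Defs
begin

lemma avg:
  fixes \<delta> :: real
  assumes finV: "finite V" and finS: "finite S"
    and hA: "\<forall>k\<in>S. A k \<subseteq> V \<and> real (card (A k)) \<ge> \<delta> * real (card V)"
    and ne: "V \<noteq> {}"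
  shows "\<exists>x\<in>V. real (card {k\<in>S. x \<in> A k}) \<ge> \<delta> * real (card S)"
proof (rule ccontr)
  assume "\<not> ?thesis"
  hence lt: "\<forall>x\<in>V. real (card {k\<in>S. x \<in> A k}) < \<delta> * real (card S)" by auto
  have c1: "\<And>x. real (card {k\<in>S. x \<in> A k}) = (\<Sum>k\<in>S. if x \<in> A k then 1 else 0)"
    using finS by (simp add: sum.If_cases Int_def)
  have c2: "\<And>k. k \<in> S \<Longrightarrow> real (card (A k)) = (\<Sum>x\<in>V. if x \<in> A k then 1 else 0)"
  proof -
    fix k assume "k \<in> S"
    hence "A k \<subseteq> V" using hA by auto
    hence "V \<inter> A k = A k" by auto
    thus "real (card (A k)) = (\<Sum>x\<in>V. if x \<in> A k then 1 else 0)"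
      using finV by (simp add: sum.If_cases)
  qed
  have "(\<Sum>x\<in>V. real (card {k\<in>S. x \<in> A k})) < (\<Sum>x\<in>V. \<delta> * real (card S))"
    using lt finV ne by (intro sum_strict_mono) auto
  also have "\<dots> = (\<Sum>k\<in>S. \<delta> * real (card V))" by simp
  also have "\<dots> \<le> (\<Sum>k\<in>S. real (card (A k)))" using hA by (intro sum_mono) auto
  also have "\<dots> = (\<Sum>k\<in>S. \<Sum>x\<in>V. (if x \<in> A k then 1 else 0 :: real))" using c2 by simp
  also have "\<dots> = (\<Sum>x\<in>V. \<Sum>k\<in>S. (if x \<in> A k then 1 else 0 :: real))" by (rule sum.swap)
  also have "\<dots> = (\<Sum>x\<in>V. real (card {k\<in>S. x \<in> A k}))" using c1 by simp
  finally show False by simp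
qed

lemma shrink:
  fixes \<delta> :: real
  assumes d: "\<delta> > 0" and fin: "finite J" and finS: "finite S0"
    and hV: "\<forall>i\<in>J. finite (V i j) \<and> V i j \<noteq> {}"
    and hA: "\<forall>i\<in>J. \<forall>k\<in>S0. A i j k \<subseteq> V i j \<and> real (card (A i j k)) \<ge> \<delta> * real (card (V i j))"
  shows "\<exists>\<beta> T. T \<subseteq> S0 \<and> real (card T) \<ge> \<delta> ^ card J * real (card S0) \<and>
           (\<forall>i\<in>J. \<beta> i \<in> V i j \<and> (\<forall>k\<in>T. \<beta> i \<in> A i j k))"
  using fin hV hA
proof (induction J rule: finite_induct)
  case empty
  show ?case by (rule exI, rule exI[of _ S0]) simp
next
  case (insert x F)
  then obtain \<beta> T where T: "T \<subseteq> S0" "real (card T) \<ge> \<delta> ^ card F * real (card S0)"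
    "\<forall>i\<in>F. \<beta> i \<in> V i j \<and> (\<forall>k\<in>T. \<beta> i \<in> A i j k)" by auto
  have finT: "finite T" using T(1) finS finite_subset by blast
  have "\<exists>y\<in>V x j. real (card {k\<in>T. y \<in> A x j k}) \<ge> \<delta> * real (card T)"
    apply (rule avg)
    using insert.prems T(1) finT by auto
  then obtain y where y: "y \<in> V x j" "real (card {k\<in>T. y \<in> A x j k}) \<ge> \<delta> * real (card T)" by auto
  show ?case
  proof (intro exI conjI)
    show "{k\<in>T. y \<in> A x j k} \<subseteq> S0" using T(1) by auto
    have "\<delta> ^ card (insert x F) * real (card S0) = \<delta> * (\<delta> ^ card F * real (card S0))"
      using insert.hyps by simp
    also have "\<dots> \<le> \<delta> * real (card T)" using T(2) d by simp
    also have "\<dots> \<le> real (card {k\<in>T. y \<in> A x j k})" using y(2) .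
    finally show "\<delta> ^ card (insert x F) * real (card S0) \<le> real (card {k\<in>T. y \<in> A x j k})" .
    show "\<forall>i\<in>insert x F. (\<beta>(x := y)) i \<in> V i j \<and> (\<forall>k\<in>{k\<in>T. y \<in> A x j k}. (\<beta>(x := y)) i \<in> A i j k)"
      using T(3) y(1) insert.hyps by auto
  qed
qed

fun gg :: "real \<Rightarrow> nat \<Rightarrow> real" where
  "gg c 0 = 0"
| "gg c (Suc m) = gg c m / c + 1"

lemma gg_nonneg: "c > 0 \<Longrightarrow> gg c m \<ge> 0"
  by (induction m) auto

lemma main:
  fixes \<delta> :: real
  assumes d: "\<delta> > 0" and hyp: "partitioned_hypergraph N V E"
    and hA: "\<forall>i j k. 1 \<le> i \<and> i < j \<and> j < k \<and> k \<le> N \<longrightarrow>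
        A i j k \<subseteq> V i j \<and> real (card (A i j k)) \<ge> \<delta> * real (card (V i j))"
  shows "\<forall>J S \<alpha>. J \<subseteq> {1..N} \<and> S \<subseteq> {1..N} \<and> (\<forall>j\<in>J. \<forall>s\<in>S. j < s) \<and>
     (\<forall>i\<in>J. \<forall>j\<in>J. i < j \<longrightarrow> \<alpha> i j \<in> V i j \<and> (\<forall>k\<in>J \<union> S. j < k \<longrightarrow> \<alpha> i j \<in> A i j k)) \<and>
     card J + m = n \<and> real (card S) \<ge> gg (min \<delta> 1 ^ n) m \<longrightarrow>
     (\<exists>I \<alpha>. I \<subseteq> {1..N} \<and> card I = n \<and>
       (\<forall>i\<in>I. \<forall>j\<in>I. i < j \<longrightarrow> \<alpha> i j \<in> V i j \<and> (\<forall>k\<in>I. j < k \<longrightarrow> \<alpha> i j \<in> A i j k)))"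
proof (induction m)
  case 0
  show ?case
  proof (intro allI impI)
    fix J S \<alpha>
    assume a: "J \<subseteq> {1..N} \<and> S \<subseteq> {1..N} \<and> (\<forall>j\<in>J. \<forall>s\<in>S. j < s) \<and>
     (\<forall>i\<in>J. \<forall>j\<in>J. i < j \<longrightarrow> \<alpha> i j \<in> V i j \<and> (\<forall>k\<in>J \<union> S. j < k \<longrightarrow> \<alpha> i j \<in> A i j k)) \<and>
     card J + 0 = n \<and> real (card S) \<ge> gg (min \<delta> 1 ^ n) 0"
    show "\<exists>I \<alpha>. I \<subseteq> {1..N} \<and> card I = n \<and>
       (\<forall>i\<in>I. \<forall>j\<in>I. i < j \<longrightarrow> \<alpha> i j \<in> V i j \<and> (\<forall>k\<in>I. j < k \<longrightarrow> \<alpha> i j \<in> A i j k))"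
    proof (intro exI[of _ J] exI[of _ \<alpha>] conjI)
      show "J \<subseteq> {1..N}" using a by blast
      show "card J = n" using a by simp
      show "\<forall>i\<in>J. \<forall>j\<in>J. i < j \<longrightarrow> \<alpha> i j \<in> V i j \<and> (\<forall>k\<in>J. j < k \<longrightarrow> \<alpha> i j \<in> A i j k)"
        using a by blast
    qed
  qed
next
  case (Suc m)
  define c where "c = min \<delta> 1 ^ n"
  have c0: "c > 0" unfolding c_def using d by simp
  show ?case
  proof (intro allI impI)
    fix J S \<alpha>
    assume a: "J \<subseteq> {1..N} \<and> S \<subseteq> {1..N} \<and> (\<forall>j\<in>J. \<forall>s\<in>S. j < s) \<and>
     (\<forall>i\<in>J. \<forall>j\<in>J. i < j \<longrightarrow> \<alpha> i j \<in> V i j \<and> (\<forall>k\<in>J \<union> S. j < k \<longrightarrow> \<alpha> i j \<in> A i j k)) \<and>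
     card J + Suc m = n \<and> real (card S) \<ge> gg (min \<delta> 1 ^ n) (Suc m)"
    from a have aJ: "J \<subseteq> {1..N}" and aS: "S \<subseteq> {1..N}" and aord: "\<forall>j\<in>J. \<forall>s\<in>S. j < s"
      and aal: "\<forall>i\<in>J. \<forall>j\<in>J. i < j \<longrightarrow> \<alpha> i j \<in> V i j \<and> (\<forall>k\<in>J \<union> S. j < k \<longrightarrow> \<alpha> i j \<in> A i j k)"
      and acard: "card J + Suc m = n" and agg: "real (card S) \<ge> gg (min \<delta> 1 ^ n) (Suc m)"
      by blast+
    have finJ: "finite J" using aJ finite_subset by blast
    have finS: "finite S" using aS finite_subset by blast
    have cS: "real (card S) \<ge> gg c m / c + 1" using agg unfolding c_def by simp
    have "gg c m / c \<ge> 0" using gg_nonneg[OF c0] c0 by simp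
    hence "card S \<ge> 1" using cS by linarith
    hence Sne: "S \<noteq> {}" by auto
    define j where "j = Min S"
    have jS: "j \<in> S" unfolding j_def using Sne finS by simp
    have jmin: "\<forall>s\<in>S. j \<le> s" unfolding j_def using finS by simp
    define S0 where "S0 = S - {j}"
    have finS0: "finite S0" using finS S0_def by simp
    have cS0: "card S0 = card S - 1" unfolding S0_def using jS finS by simp
    have jN: "1 \<le> j \<and> j \<le> N" using jS aS by auto
    have S0gt: "\<forall>k\<in>S0. j < k \<and> k \<le> N"
    proof
      fix k assume "k \<in> S0"
      hence k: "k \<in> S" "k \<noteq> j" unfolding S0_def by auto
      hence "j \<le> k" using jmin by blast
      hence "j < k" using k(2) by simp
      moreover have "k \<le> N" using k(1) aS by auto
      ultimately show "j < k \<and> k \<le> N" by simp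
    qed
    have Jlt: "\<forall>i\<in>J. 1 \<le> i \<and> i < j"
    proof
      fix i assume i: "i \<in> J"
      hence "1 \<le> i" using aJ by auto
      moreover have "i < j" using aord i jS by blast
      ultimately show "1 \<le> i \<and> i < j" by simp
    qed
    have pv: "\<forall>i j. 1 \<le> i \<and> i < j \<and> j \<le> N \<longrightarrow> finite (V i j) \<and> V i j \<noteq> {}"
      using hyp unfolding partitioned_hypergraph_def by (rule conjunct1)
    obtain \<beta> T where T: "T \<subseteq> S0" "real (card T) \<ge> \<delta> ^ card J * real (card S0)"
      "\<forall>i\<in>J. \<beta> i \<in> V i j \<and> (\<forall>k\<in>T. \<beta> i \<in> A i j k)"
    proof -
      have p1: "\<forall>i\<in>J. finite (V i j) \<and> V i j \<noteq> {}" using pv Jlt jN by blast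
      have p2: "\<forall>i\<in>J. \<forall>k\<in>S0. A i j k \<subseteq> V i j \<and> real (card (A i j k)) \<ge> \<delta> * real (card (V i j))"
      proof (intro ballI)
        fix i k assume "i \<in> J" "k \<in> S0"
        hence "1 \<le> i \<and> i < j \<and> j < k \<and> k \<le> N" using Jlt S0gt by blast
        thus "A i j k \<subseteq> V i j \<and> real (card (A i j k)) \<ge> \<delta> * real (card (V i j))" using hA by blast
      qed
      show ?thesis using shrink[where V=V and j=j and A=A, OF d finJ finS0 p1 p2] that by blast
    qed
    have jJ: "j \<notin> J" using Jlt by auto
    have cJ: "card J \<le> n" using acard by simp
    have "c \<le> min \<delta> 1 ^ card J" unfolding c_def
      by (rule power_decreasing[OF cJ]) (use d in auto)
    also have "\<dots> \<le> \<delta> ^ card J" by (rule power_mono) (use d in auto)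
    finally have cle: "c \<le> \<delta> ^ card J" .
    have "gg c m = c * (real (card S) - 1) - c * (real (card S) - 1 - gg c m / c)"
      using c0 by (simp add: field_simps)
    also have "\<dots> \<le> c * (real (card S) - 1)" using cS c0 by simp
    also have "\<dots> = c * real (card S0)" using cS0 \<open>card S \<ge> 1\<close> by (simp add: of_nat_diff)
    also have "\<dots> \<le> \<delta> ^ card J * real (card S0)" using cle by (intro mult_right_mono) auto
    also have "\<dots> \<le> real (card T)" using T(2) .
    finally have cT: "gg c m \<le> real (card T)" .
    define \<alpha>' where "\<alpha>' = (\<lambda>i j'. if j' = j then \<beta> i else \<alpha> i j')"
    show "\<exists>I \<alpha>. I \<subseteq> {1..N} \<and> card I = n \<and>
       (\<forall>i\<in>I. \<forall>j\<in>I. i < j \<longrightarrow> \<alpha> i j \<in> V i j \<and> (\<forall>k\<in>I. j < k \<longrightarrow> \<alpha> i j \<in> A i j k))"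
    proof (rule Suc.IH[rule_format, of "insert j J" T \<alpha>'], intro conjI)
      show "insert j J \<subseteq> {1..N}" using aJ jN by auto
      show "T \<subseteq> {1..N}" using T(1) aS S0_def by auto
      show "\<forall>j'\<in>insert j J. \<forall>s\<in>T. j' < s" using T(1) S0gt aord S0_def by auto
      show "card (insert j J) + m = n" using acard jJ finJ by simp
      show "gg (min \<delta> 1 ^ n) m \<le> real (card T)" using cT c_def by simp
      show "\<forall>i\<in>insert j J. \<forall>j'\<in>insert j J. i < j' \<longrightarrow> \<alpha>' i j' \<in> V i j' \<and>
              (\<forall>k\<in>insert j J \<union> T. j' < k \<longrightarrow> \<alpha>' i j' \<in> A i j' k)"
      proof (intro ballI impI)
        fix i j' assume i: "i \<in> insert j J" and j': "j' \<in> insert j J" and ij: "i < j'"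
        show "\<alpha>' i j' \<in> V i j' \<and> (\<forall>k\<in>insert j J \<union> T. j' < k \<longrightarrow> \<alpha>' i j' \<in> A i j' k)"
        proof (cases "j' = j")
          case True
          hence iJ: "i \<in> J" using i ij by auto
          have "\<forall>k\<in>insert j J \<union> T. j' < k \<longrightarrow> k \<in> T" using True Jlt by auto
          thus ?thesis using True T(3) iJ unfolding \<alpha>'_def by auto
        next
          case False
          hence jJ': "j' \<in> J" using j' by auto
          hence iJ: "i \<in> J" using i ij Jlt by auto
          have "\<forall>k\<in>insert j J \<union> T. k \<in> J \<union> S" using jS T(1) S0_def by auto
          thus ?thesis using False aal iJ jJ' ij unfolding \<alpha>'_def by auto
        qed
      qed
    qed
  qed
qed

theorem lemma4p4:
  fixes \<delta> :: real and n :: nat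
  assumes "\<delta> > 0"
  shows "\<exists>N::nat. \<forall>(V :: nat \<Rightarrow> nat \<Rightarrow> nat set) (E :: nat set set)
            (A :: nat \<Rightarrow> nat \<Rightarrow> nat \<Rightarrow> nat set).
    partitioned_hypergraph N V E \<longrightarrow>
    (\<forall>i j k. 1 \<le> i \<and> i < j \<and> j < k \<and> k \<le> N \<longrightarrow>
        A i j k \<subseteq> V i j \<and> real (card (A i j k)) \<ge> \<delta> * real (card (V i j))) \<longrightarrow>
    (\<exists>I \<alpha>. I \<subseteq> {1..N} \<and> card I = n \<and>
       (\<forall>i\<in>I. \<forall>j\<in>I. i < j \<longrightarrow>
          \<alpha> i j \<in> V i j \<and> (\<forall>k\<in>I. j < k \<longrightarrow> \<alpha> i j \<in> A i j k)))"
proof (intro exI[of _ "nat \<lceil>gg (min \<delta> 1 ^ n) n\<rceil>"] allI impI)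
  fix V E A
  let ?N = "nat \<lceil>gg (min \<delta> 1 ^ n) n\<rceil>"
  assume h1: "partitioned_hypergraph ?N V E"
    and h2: "\<forall>i j k. 1 \<le> i \<and> i < j \<and> j < k \<and> k \<le> ?N \<longrightarrow>
        A i j k \<subseteq> V i j \<and> real (card (A i j k)) \<ge> \<delta> * real (card (V i j))"
  have "gg (min \<delta> 1 ^ n) n \<le> real ?N" by linarith
  thus "\<exists>I \<alpha>. I \<subseteq> {1..?N} \<and> card I = n \<and>
       (\<forall>i\<in>I. \<forall>j\<in>I. i < j \<longrightarrow>
          \<alpha> i j \<in> V i j \<and> (\<forall>k\<in>I. j < k \<longrightarrow> \<alpha> i j \<in> A i j k))"
    using main[OF assms h1 h2, of n, rule_format, of "{}" "{1..?N}" "\<lambda>_ _. 0"] by simp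
qed

end
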